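(* Let $d\in\mathbb N$, let $F$ be a countable locally finite structure, $G=\mathrm{Aut}(F)$ (with the pointwise convergence topology), and let $A\in\mathrm{Age}(F)$ be such that $F$ is $A$-homogeneous. If $|M(G)|\le d$, then $F\hookrightarrow(B)^A_{k,d}$ for all $B\in\mathrm{Age}(F)$ and all $k\ge 2$.
   Context: For structures $A,B$, $B^A$ is the set of embeddings of $A$ into $B$. $\mathrm{Age}(F)$ is the class of finitely generated structures embeddable in $F$. $F$ is $A$-homogeneous if for all $a,a'\in F^A$ there is $g\in\mathrm{Aut}(F)$ with $g\circ a=a'$. $M(G)$ is the universal minimal $G$-flow (flows are continuous actions on compact Hausdorff spaces). $F\hookrightarrow(B)^A_{k,d}$ means: for every $\chi:F^A\to\{0,\dots,k-1\}$ there is $b\in F^B$ with $|\chi(\{b\circ a:a\in B^A\})|\le d$. *)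

theory Defs
  imports "HOL-Analysis.Analysis"
begin

text \<open>First-order structures: a domain, interpretations of function symbols
 (constants are 0-ary functions) and relation symbols, and the signature (arities).\<close>

record ('f,'r,'a) struc =
  sdom :: "'a set"
  sfn :: "'f \<Rightarrow> 'a list \<Rightarrow> 'a"
  srl :: "'r \<Rightarrow> 'a list \<Rightarrow> bool"
  far :: "'f \<Rightarrow> nat"
  rar :: "'r \<Rightarrow> nat"

definition wf_struc :: "('f,'r,'a) struc \<Rightarrow> bool" where
  "wf_struc A \<longleftrightarrow>
     (\<forall>f xs. set xs \<subseteq> sdom A \<and> length xs = far A f \<longrightarrow> sfn A f xs \<in> sdom A)"

definition embeddings :: "('f,'r,'b) struc \<Rightarrow> ('f,'r,'a) struc \<Rightarrow> ('b \<Rightarrow> 'a) set" where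
  "embeddings A B = {e. far A = far B \<and> rar A = rar B \<and>
     e \<in> sdom A \<rightarrow>\<^sub>E sdom B \<and> inj_on e (sdom A) \<and>
     (\<forall>f xs. set xs \<subseteq> sdom A \<and> length xs = far A f \<longrightarrow> e (sfn A f xs) = sfn B f (map e xs)) \<and>
     (\<forall>r xs. set xs \<subseteq> sdom A \<and> length xs = rar A r \<longrightarrow> (srl A r xs \<longleftrightarrow> srl B r (map e xs)))}"

definition closed_sub :: "('f,'r,'a) struc \<Rightarrow> 'a set \<Rightarrow> bool" where
  "closed_sub A T \<longleftrightarrow> T \<subseteq> sdom A \<and>
     (\<forall>f xs. set xs \<subseteq> T \<and> length xs = far A f \<longrightarrow> sfn A f xs \<in> T)"

definition generated :: "('f,'r,'a) struc \<Rightarrow> 'a set \<Rightarrow> 'a set" where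
  "generated A S = \<Inter>{T. S \<subseteq> T \<and> closed_sub A T}"

definition fin_generated :: "('f,'r,'a) struc \<Rightarrow> bool" where
  "fin_generated A \<longleftrightarrow> (\<exists>S. finite S \<and> S \<subseteq> sdom A \<and> generated A S = sdom A)"

definition locally_finite :: "('f,'r,'a) struc \<Rightarrow> bool" where
  "locally_finite F \<longleftrightarrow> (\<forall>S. finite S \<and> S \<subseteq> sdom F \<longrightarrow> finite (generated F S))"

definition in_age :: "('f,'r,'b) struc \<Rightarrow> ('f,'r,'a) struc \<Rightarrow> bool" where
  "in_age A F \<longleftrightarrow> wf_struc A \<and> fin_generated A \<and> embeddings A F \<noteq> {}"

definition Aut :: "('f,'r,'a) struc \<Rightarrow> ('a \<Rightarrow> 'a) set" where
  "Aut F = {g \<in> embeddings F F. g ` sdom F = sdom F}"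

definition homogeneous_for :: "('f,'r,'a) struc \<Rightarrow> ('f,'r,'b) struc \<Rightarrow> bool" where
  "homogeneous_for F A \<longleftrightarrow>
     (\<forall>a\<in>embeddings A F. \<forall>a'\<in>embeddings A F. \<exists>g\<in>Aut F. compose (sdom A) g a = a')"

definition aut_topology :: "('f,'r,'a) struc \<Rightarrow> ('a \<Rightarrow> 'a) topology" where
  "aut_topology F =
     subtopology (product_topology (\<lambda>_. discrete_topology (sdom F)) (sdom F)) (Aut F)"

definition flow :: "('f,'r,'a) struc \<Rightarrow> 'x topology \<Rightarrow> (('a \<Rightarrow> 'a) \<Rightarrow> 'x \<Rightarrow> 'x) \<Rightarrow> bool" where
  "flow F T act \<longleftrightarrow> compact_space T \<and> Hausdorff_space T \<and>
     continuous_map (prod_topology (aut_topology F) T) T (\<lambda>(g,x). act g x) \<and>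
     (\<forall>x\<in>topspace T. act (restrict id (sdom F)) x = x) \<and>
     (\<forall>g\<in>Aut F. \<forall>h\<in>Aut F. \<forall>x\<in>topspace T. act (compose (sdom F) g h) x = act g (act h x))"

definition minimal_flow :: "('f,'r,'a) struc \<Rightarrow> 'x topology \<Rightarrow> (('a \<Rightarrow> 'a) \<Rightarrow> 'x \<Rightarrow> 'x) \<Rightarrow> bool" where
  "minimal_flow F T act \<longleftrightarrow> flow F T act \<and> topspace T \<noteq> {} \<and>
     (\<forall>Z. closedin T Z \<and> Z \<noteq> {} \<and> (\<forall>g\<in>Aut F. \<forall>x\<in>Z. act g x \<in> Z) \<longrightarrow> Z = topspace T)"

definition flow_hom :: "('f,'r,'a) struc \<Rightarrow> 'x topology \<Rightarrow> (('a \<Rightarrow> 'a) \<Rightarrow> 'x \<Rightarrow> 'x)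
    \<Rightarrow> 'y topology \<Rightarrow> (('a \<Rightarrow> 'a) \<Rightarrow> 'y \<Rightarrow> 'y) \<Rightarrow> ('x \<Rightarrow> 'y) \<Rightarrow> bool" where
  "flow_hom F T act T' act' h \<longleftrightarrow> continuous_map T T' h \<and>
     (\<forall>g\<in>Aut F. \<forall>x\<in>topspace T. h (act g x) = act' g (h x))"

text \<open>A universe type of cardinality 2^(2^continuum), large enough to carry an
 isomorphic copy of every minimal flow of Aut(F) for countable F.\<close>
type_synonym flow_univ = "((nat \<Rightarrow> bool) \<Rightarrow> bool) \<Rightarrow> bool"

definition universal_minimal_flow ::
    "('f,'r,'a) struc \<Rightarrow> 'x topology \<Rightarrow> (('a \<Rightarrow> 'a) \<Rightarrow> 'x \<Rightarrow> 'x) \<Rightarrow> bool" where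
  "universal_minimal_flow F T act \<longleftrightarrow> minimal_flow F T act \<and>
     (\<forall>(T'::flow_univ topology) act'. minimal_flow F T' act' \<longrightarrow> (\<exists>h. flow_hom F T act T' act' h))"

definition UMF_card_le :: "('f,'r,'a) struc \<Rightarrow> nat \<Rightarrow> bool" where
  "UMF_card_le F d \<longleftrightarrow> (\<exists>(T::flow_univ topology) act.
     universal_minimal_flow F T act \<and> finite (topspace T) \<and> card (topspace T) \<le> d)"

definition arrows :: "('f,'r,'a) struc \<Rightarrow> ('f,'r,'c) struc \<Rightarrow> ('f,'r,'b) struc \<Rightarrow> nat \<Rightarrow> nat \<Rightarrow> bool" where
  "arrows F B A k d \<longleftrightarrow>
     (\<forall>(col :: (('b \<Rightarrow> 'a) \<Rightarrow> nat)). col ` embeddings A F \<subseteq> {..<k} \<longrightarrow>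
        (\<exists>b\<in>embeddings B F. card (col ` ((\<lambda>a. compose (sdom A) b a) ` embeddings A B)) \<le> d))"

end

theory Submission
  imports Defs
begin



lemma emb_compose:
  assumes wfC: "wf_struc C" and e: "e \<in> embeddings C D" and e': "e' \<in> embeddings D H"
  shows "compose (sdom C) e' e \<in> embeddings C H"
proof -
  have ePi: "e \<in> sdom C \<rightarrow>\<^sub>E sdom D" and e'Pi: "e' \<in> sdom D \<rightarrow>\<^sub>E sdom H"
    using e e' by (auto simp: embeddings_def)
  have map_eq: "map (compose (sdom C) e' e) xs = map e' (map e xs)" if "set xs \<subseteq> sdom C" for xs
    using that by (auto simp: compose_def)
  have setm: "set (map e xs) \<subseteq> sdom D" if "set xs \<subseteq> sdom C" for xs
    using that ePi by auto
  show ?thesis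
    unfolding embeddings_def
  proof (intro CollectI conjI allI impI)
    show "far C = far H" "rar C = rar H" using e e' by (auto simp: embeddings_def)
    show "compose (sdom C) e' e \<in> sdom C \<rightarrow>\<^sub>E sdom H"
      using ePi e'Pi by (auto simp: compose_def)
    show "inj_on (compose (sdom C) e' e) (sdom C)"
      using e e' ePi unfolding embeddings_def inj_on_def compose_def by (auto simp: PiE_iff)
  next
    fix f xs assume xs: "set xs \<subseteq> sdom C \<and> length xs = far C f"
    have wf: "sfn C f xs \<in> sdom C" using wfC xs unfolding wf_struc_def by blast
    have "compose (sdom C) e' e (sfn C f xs) = e' (e (sfn C f xs))" using wf by (simp add: compose_def)
    also have "\<dots> = e' (sfn D f (map e xs))" using e xs unfolding embeddings_def by auto
    also have "\<dots> = sfn H f (map e' (map e xs))" using e e' xs setm[of xs] unfolding embeddings_def by auto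
    finally show "compose (sdom C) e' e (sfn C f xs) = sfn H f (map (compose (sdom C) e' e) xs)"
      by (simp only: map_eq[OF conjunct1[OF xs]])
  next
    fix r xs assume xs: "set xs \<subseteq> sdom C \<and> length xs = rar C r"
    have "srl C r xs = srl D r (map e xs)" using e xs unfolding embeddings_def by auto
    also have "\<dots> = srl H r (map e' (map e xs))" using e e' xs setm[of xs] unfolding embeddings_def by auto
    finally show "srl C r xs = srl H r (map (compose (sdom C) e' e) xs)"
      by (simp only: map_eq[OF conjunct1[OF xs]])
  qed
qed




definition ginv :: "('f,'r,'a) struc \<Rightarrow> ('a \<Rightarrow> 'a) \<Rightarrow> 'a \<Rightarrow> 'a" where
  "ginv F g = restrict (inv_into (sdom F) g) (sdom F)"

lemma aut_PiE: "g \<in> Aut F \<Longrightarrow> g \<in> sdom F \<rightarrow>\<^sub>E sdom F"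
  unfolding Aut_def embeddings_def by blast

lemma aut_emb: "g \<in> Aut F \<Longrightarrow> g \<in> embeddings F F"
  unfolding Aut_def by blast

lemma aut_bij: "g \<in> Aut F \<Longrightarrow> bij_betw g (sdom F) (sdom F)"
proof -
  assume g: "g \<in> Aut F"
  have "inj_on g (sdom F)" using g unfolding Aut_def embeddings_def by blast
  moreover have "g ` sdom F = sdom F" using g unfolding Aut_def by blast
  ultimately show ?thesis unfolding bij_betw_def by blast
qed

lemma ginv_in: "g \<in> Aut F \<Longrightarrow> y \<in> sdom F \<Longrightarrow> ginv F g y \<in> sdom F"
  unfolding ginv_def using aut_bij[of g F]
  by (simp add: bij_betw_def inv_into_into)

lemma ginv_right: "g \<in> Aut F \<Longrightarrow> y \<in> sdom F \<Longrightarrow> g (ginv F g y) = y"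
  unfolding ginv_def using aut_bij[of g F]
  by (simp add: bij_betw_def f_inv_into_f)

lemma ginv_left: "g \<in> Aut F \<Longrightarrow> x \<in> sdom F \<Longrightarrow> ginv F g (g x) = x"
proof -
  assume g: "g \<in> Aut F" and x: "x \<in> sdom F"
  have gx: "g x \<in> sdom F" using PiE_mem[OF aut_PiE[OF g] x] .
  have "inj_on g (sdom F)" using aut_bij[OF g] by (simp add: bij_betw_def)
  thus ?thesis unfolding ginv_def using gx x by simp
qed

lemma emb_fn: "e \<in> embeddings C D \<Longrightarrow> set xs \<subseteq> sdom C \<Longrightarrow> length xs = far C f \<Longrightarrow> e (sfn C f xs) = sfn D f (map e xs)"
  unfolding embeddings_def by blast

lemma emb_rl: "e \<in> embeddings C D \<Longrightarrow> set xs \<subseteq> sdom C \<Longrightarrow> length xs = rar C r \<Longrightarrow> srl C r xs = srl D r (map e xs)"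
  unfolding embeddings_def by blast

lemma ginv_PiE: "ginv F g \<in> sdom F \<rightarrow>\<^sub>E sdom F" if "g \<in> Aut F"
  using ginv_in[OF that] by (auto simp: ginv_def)

lemma ginv_aut:
  assumes wf: "wf_struc F" and g: "g \<in> Aut F"
  shows "ginv F g \<in> Aut F"
proof -
  let ?h = "ginv F g"
  have gPi: "g \<in> sdom F \<rightarrow>\<^sub>E sdom F" using aut_PiE[OF g] .
  have mapgh: "map g (map ?h xs) = xs" if "set xs \<subseteq> sdom F" for xs
    using that ginv_right[OF g] by (induct xs) auto
  have seth: "set (map ?h xs) \<subseteq> sdom F" if "set xs \<subseteq> sdom F" for xs
    using that ginv_in[OF g] by auto
  have inj: "inj_on ?h (sdom F)"
    by (metis ginv_right[OF g] inj_onI)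
  have img: "?h ` sdom F = sdom F"
  proof
    show "?h ` sdom F \<subseteq> sdom F" using ginv_in[OF g] by auto
    show "sdom F \<subseteq> ?h ` sdom F"
    proof
      fix x assume x: "x \<in> sdom F"
      hence "g x \<in> sdom F" using gPi by auto
      thus "x \<in> ?h ` sdom F" using ginv_left[OF g x] by (metis image_eqI)
    qed
  qed
  have emb: "?h \<in> embeddings F F"
    unfolding embeddings_def
  proof (intro CollectI conjI allI impI)
    show "far F = far F" "rar F = rar F" by auto
    show "?h \<in> sdom F \<rightarrow>\<^sub>E sdom F" using ginv_PiE[OF g] .
    show "inj_on ?h (sdom F)" using inj .
  next
    fix f xs assume xs: "set xs \<subseteq> sdom F \<and> length xs = far F f"
    have s1: "sfn F f (map ?h xs) \<in> sdom F" using wf seth[of xs] xs unfolding wf_struc_def by auto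
    have "g (sfn F f (map ?h xs)) = sfn F f (map g (map ?h xs))"
      using emb_fn[OF aut_emb[OF g] seth[of xs]] xs by simp
    also have "\<dots> = sfn F f xs" using mapgh xs by simp
    finally have "g (sfn F f (map ?h xs)) = sfn F f xs" .
    hence "?h (g (sfn F f (map ?h xs))) = ?h (sfn F f xs)" by simp
    thus "?h (sfn F f xs) = sfn F f (map ?h xs)" using ginv_left[OF g s1] by simp
  next
    fix r xs assume xs: "set xs \<subseteq> sdom F \<and> length xs = rar F r"
    have "srl F r (map ?h xs) = srl F r (map g (map ?h xs))"
      using emb_rl[OF aut_emb[OF g] seth[of xs]] xs by simp
    thus "srl F r xs = srl F r (map ?h xs)" using mapgh xs by simp
  qed
  show ?thesis using emb img by (simp add: Aut_def)
qed

lemma ginv_ginv: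
  assumes g: "g \<in> Aut F" shows "ginv F (ginv F g) = g"
proof (rule ext)
  fix x show "ginv F (ginv F g) x = g x"
  proof (cases "x \<in> sdom F")
    case True
    have gx: "g x \<in> sdom F" using aut_PiE[OF g] True by auto
    have e1: "ginv F g (g x) = x" using ginv_left[OF g True] .
    have inj: "inj_on (ginv F g) (sdom F)"
    proof (rule inj_onI)
      fix u v assume u: "u \<in> sdom F" and v: "v \<in> sdom F" and eq: "ginv F g u = ginv F g v"
      have "g (ginv F g u) = g (ginv F g v)" using eq by simp
      thus "u = v" using ginv_right[OF g u] ginv_right[OF g v] by simp
    qed
    have ii: "inv_into (sdom F) (ginv F g) x = g x"
      by (rule inv_into_f_eq[OF inj gx e1])
    have "ginv F (ginv F g) x = inv_into (sdom F) (ginv F g) x"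
      unfolding ginv_def[of F "ginv F g"] using True by (rule restrict_apply')
    thus ?thesis using ii by (rule trans)
  next
    case False
    have "g x = undefined" using PiE_arb[OF aut_PiE[OF g] False] .
    moreover have "ginv F (ginv F g) x = undefined"
      unfolding ginv_def[of F "ginv F g"] using False by simp
    ultimately show ?thesis by simp
  qed
qed

lemma id_aut: assumes wf: "wf_struc F" shows "restrict id (sdom F) \<in> Aut F"
proof -
  have mid: "map (restrict id (sdom F)) xs = xs" if "set xs \<subseteq> sdom F" for xs
    using that by (induct xs) auto
  have emb: "restrict id (sdom F) \<in> embeddings F F"
    unfolding embeddings_def
  proof (intro CollectI conjI allI impI)
    show "far F = far F" "rar F = rar F" by simp_all
    show "restrict id (sdom F) \<in> sdom F \<rightarrow>\<^sub>E sdom F" by simp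
    show "inj_on (restrict id (sdom F)) (sdom F)" by (simp add: inj_on_def)
  next
    fix f xs assume xs: "set xs \<subseteq> sdom F \<and> length xs = far F f"
    have "sfn F f xs \<in> sdom F" using wf xs unfolding wf_struc_def by blast
    thus "restrict id (sdom F) (sfn F f xs) = sfn F f (map (restrict id (sdom F)) xs)"
      using mid xs by simp
  next
    fix r xs assume xs: "set xs \<subseteq> sdom F \<and> length xs = rar F r"
    thus "srl F r xs = srl F r (map (restrict id (sdom F)) xs)" using mid by simp
  qed
  have "restrict id (sdom F) ` sdom F = sdom F" by simp
  thus ?thesis using emb unfolding Aut_def by blast
qed

lemma ginv_id: "ginv F (restrict id (sdom F)) = restrict id (sdom F)"
  unfolding ginv_def by (rule ext) (auto simp: inv_into_def intro!: some_equality)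

lemma comp_aut:
  assumes wf: "wf_struc F" and g: "g \<in> Aut F" and h: "h \<in> Aut F"
  shows "compose (sdom F) g h \<in> Aut F"
proof -
  have "compose (sdom F) g h \<in> embeddings F F" using emb_compose[OF wf aut_emb[OF h] aut_emb[OF g]] .
  moreover have "compose (sdom F) g h ` sdom F = sdom F"
  proof -
    have "compose (sdom F) g h ` sdom F = (g \<circ> h) ` sdom F" unfolding compose_def o_def by (rule image_restrict_eq)
    also have "\<dots> = g ` (h ` sdom F)" by (rule image_comp[symmetric])
    also have "\<dots> = sdom F" using g h unfolding Aut_def by simp
    finally show ?thesis .
  qed
  ultimately show ?thesis by (simp add: Aut_def)
qed

lemma ginv_comp:
  assumes wf: "wf_struc F" and g: "g \<in> Aut F" and h: "h \<in> Aut F"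
  shows "ginv F (compose (sdom F) g h) = compose (sdom F) (ginv F h) (ginv F g)"
proof (rule ext)
  fix x show "ginv F (compose (sdom F) g h) x = compose (sdom F) (ginv F h) (ginv F g) x"
  proof (cases "x \<in> sdom F")
    case True
    let ?k = "compose (sdom F) g h"
    have k: "?k \<in> Aut F" using comp_aut[OF wf g h] .
    let ?y = "ginv F h (ginv F g x)"
    have y: "?y \<in> sdom F" using ginv_in[OF h ginv_in[OF g True]] .
    have "?k ?y = x" using y ginv_right[OF h ginv_in[OF g True]] ginv_right[OF g True]
      by (simp add: compose_def)
    hence "ginv F ?k (?k ?y) = ?y" using ginv_left[OF k y] by simp
    thus ?thesis using True \<open>?k ?y = x\<close> by (simp add: compose_def)
  next
    case False thus ?thesis by (simp add: ginv_def compose_def)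
  qed
qed




definition actc :: "('f,'r,'a) struc \<Rightarrow> ('f,'r,'b) struc \<Rightarrow> ('a \<Rightarrow> 'a) \<Rightarrow> (('b \<Rightarrow> 'a) \<Rightarrow> nat) \<Rightarrow> (('b \<Rightarrow> 'a) \<Rightarrow> nat)" where
  "actc F A g c = (if g \<in> Aut F then restrict (\<lambda>a. c (compose (sdom A) (ginv F g) a)) (embeddings A F) else c)"

definition PT :: "('f,'r,'a) struc \<Rightarrow> ('f,'r,'b) struc \<Rightarrow> nat \<Rightarrow> (('b \<Rightarrow> 'a) \<Rightarrow> nat) topology" where
  "PT F A k = product_topology (\<lambda>_. discrete_topology {..<k}) (embeddings A F)"

lemma open_fix:
  assumes fS: "finite S" and SI: "S \<subseteq> I" and vU: "\<forall>i\<in>S. v i \<in> U"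
  shows "openin (product_topology (\<lambda>_. discrete_topology U) I) {f \<in> PiE I (\<lambda>_. U). \<forall>i\<in>S. f i = v i}"
proof -
  have eq: "{f \<in> PiE I (\<lambda>_. U). \<forall>i\<in>S. f i = v i} = PiE I (\<lambda>i. if i \<in> S then {v i} else U)"
  proof (rule set_eqI, rule iffI)
    fix x assume x: "x \<in> {f \<in> PiE I (\<lambda>_. U). \<forall>i\<in>S. f i = v i}"
    hence x1: "x \<in> extensional I" "\<forall>i\<in>I. x i \<in> U" "\<forall>i\<in>S. x i = v i" by (simp_all add: PiE_iff)
    have "\<forall>i\<in>I. x i \<in> (if i \<in> S then {v i} else U)"
    proof
      fix i assume "i \<in> I" thus "x i \<in> (if i \<in> S then {v i} else U)" using x1 by (cases "i \<in> S") simp_all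
    qed
    thus "x \<in> PiE I (\<lambda>i. if i \<in> S then {v i} else U)" using x1(1) by (simp add: PiE_iff)
  next
    fix x assume x: "x \<in> PiE I (\<lambda>i. if i \<in> S then {v i} else U)"
    hence x1: "x \<in> extensional I" "\<forall>i\<in>I. x i \<in> (if i \<in> S then {v i} else U)" by (simp_all add: PiE_iff)
    have a: "\<forall>i\<in>I. x i \<in> U"
    proof
      fix i assume i: "i \<in> I" thus "x i \<in> U" using x1(2) vU by (cases "i \<in> S") force+
    qed
    have b: "\<forall>i\<in>S. x i = v i"
    proof
      fix i assume i: "i \<in> S" hence "i \<in> I" using SI by blast
      thus "x i = v i" using x1(2) i by force
    qed
    show "x \<in> {f \<in> PiE I (\<lambda>_. U). \<forall>i\<in>S. f i = v i}" using x1(1) a b by (simp add: PiE_iff)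
  qed
  have fin: "finite {i \<in> I. (if i \<in> S then {v i} else U) \<noteq> topspace (discrete_topology U)}"
    by (rule finite_subset[OF _ fS]) auto
  have op: "\<forall>i\<in>I. openin (discrete_topology U) (if i \<in> S then {v i} else U)"
    using vU by simp
  have "openin (product_topology (\<lambda>_. discrete_topology U) I) (PiE I (\<lambda>i. if i \<in> S then {v i} else U))"
    apply (subst openin_PiE_gen)
    apply (rule disjI2)
    apply (rule conjI)
     apply (rule fin)
    apply (rule op)
    done
  thus ?thesis by (simp only: eq)
qed

lemma topspace_aut: "topspace (aut_topology F) = Aut F"
proof -
  have "Aut F \<subseteq> PiE (sdom F) (\<lambda>_. sdom F)" using aut_PiE by (rule subsetI)
  thus ?thesis unfolding aut_topology_def topspace_subtopology topspace_product_topology topspace_discrete_topology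
    by (rule Int_absorb1)
qed

lemma emb_aut_compose:
  assumes "wf_struc C" "a \<in> embeddings C F" "g \<in> Aut F"
  shows "compose (sdom C) g a \<in> embeddings C F"
  using emb_compose[OF assms(1,2) aut_emb[OF assms(3)]] .

lemma emb_PiE: "a \<in> embeddings C F \<Longrightarrow> a \<in> sdom C \<rightarrow>\<^sub>E sdom F"
  unfolding embeddings_def by blast

lemma tsPT: "topspace (PT F A k) = PiE (embeddings A F) (\<lambda>_. {..<k})"
  unfolding PT_def topspace_product_topology topspace_discrete_topology ..

lemma actc_in:
  assumes wfA: "wf_struc A" and wf: "wf_struc F" and g: "g \<in> Aut F" and c: "c \<in> topspace (PT F A k)"
  shows "actc F A g c \<in> topspace (PT F A k)"
proof -
  have inE: "compose (sdom A) (ginv F g) a \<in> embeddings A F" if "a \<in> embeddings A F" for a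
    using emb_aut_compose[OF wfA that ginv_aut[OF wf g]] .
  have c': "c \<in> PiE (embeddings A F) (\<lambda>_. {..<k})" using c unfolding tsPT .
  have "\<forall>a\<in>embeddings A F. c (compose (sdom A) (ginv F g) a) \<in> {..<k}"
  proof
    fix a assume "a \<in> embeddings A F"
    show "c (compose (sdom A) (ginv F g) a) \<in> {..<k}" by (rule PiE_mem[OF c' inE[OF \<open>a \<in> embeddings A F\<close>]])
  qed
  thus ?thesis using g unfolding actc_def tsPT by (simp add: PiE_iff)
qed


lemma hid_lemma:
  assumes a: "a \<in> embeddings A F"
  shows "compose (sdom A) (restrict id (sdom F)) a = a"
proof (rule ext)
  fix z show "compose (sdom A) (restrict id (sdom F)) a z = a z"
  proof (cases "z \<in> sdom A")
    case True
    have "a z \<in> sdom F" using PiE_mem[OF emb_PiE[OF a] True] .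
    thus ?thesis using True by (simp add: compose_def)
  next
    case False
    have "a z = undefined" using PiE_arb[OF emb_PiE[OF a] False] .
    thus ?thesis using False by (simp add: compose_def)
  qed
qed

lemma actc_flow:
  assumes wfA: "wf_struc A" and wf: "wf_struc F" and finA: "finite (sdom A)" and k: "k > 0"
  shows "flow F (PT F A k) (actc F A)"
  unfolding flow_def
proof (intro conjI ballI)
  show "compact_space (PT F A k)"
    unfolding PT_def by (simp add: compact_space_product_topology compact_space_discrete_topology)
  show "Hausdorff_space (PT F A k)"
    unfolding PT_def by (simp add: Hausdorff_space_product_topology)
next
  fix c assume c: "c \<in> topspace (PT F A k)"
  let ?E = "embeddings A F"
  let ?i = "restrict id (sdom F)"
  have "actc F A ?i c = restrict (\<lambda>a. c (compose (sdom A) ?i a)) ?E"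
    using id_aut[OF wf] by (simp add: actc_def ginv_id)
  also have "\<dots> = restrict c ?E"
    by (rule restrict_ext) (simp add: hid_lemma)
  also have "\<dots> = c" using c unfolding tsPT by (rule PiE_restrict)
  finally show "actc F A ?i c = c" .
next
  fix g h c assume g: "g \<in> Aut F" and h: "h \<in> Aut F" and c: "c \<in> topspace (PT F A k)"
  let ?E = "embeddings A F"
  have gh: "compose (sdom F) g h \<in> Aut F" using comp_aut[OF wf g h] .
  have inE: "compose (sdom A) (ginv F g) a \<in> ?E" if "a \<in> ?E" for a
    using emb_aut_compose[OF wfA that ginv_aut[OF wf g]] .
  have ceq: "compose (sdom A) (ginv F (compose (sdom F) g h)) a
        = compose (sdom A) (ginv F h) (compose (sdom A) (ginv F g) a)" if "a \<in> ?E" for a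
  proof -
    have "a \<in> sdom A \<rightarrow> sdom F" using PiE_iff emb_PiE[OF that] by (simp add: PiE_iff Pi_iff)
    thus ?thesis unfolding ginv_comp[OF wf g h] by (rule compose_assoc[symmetric])
  qed
  have "actc F A (compose (sdom F) g h) c = restrict (\<lambda>a. c (compose (sdom A) (ginv F (compose (sdom F) g h)) a)) ?E"
    using gh by (simp add: actc_def)
  also have "\<dots> = restrict (\<lambda>a. actc F A h c (compose (sdom A) (ginv F g) a)) ?E"
  proof (rule restrict_ext)
    fix a assume "a \<in> ?E"
    thus "c (compose (sdom A) (ginv F (compose (sdom F) g h)) a) = actc F A h c (compose (sdom A) (ginv F g) a)"
      using inE h ceq by (simp add: actc_def)
  qed
  also have "\<dots> = actc F A g (actc F A h c)" using g by (simp add: actc_def)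
  finally show "actc F A (compose (sdom F) g h) c = actc F A g (actc F A h c)" .
next
  let ?E = "embeddings A F"
  let ?f = "\<lambda>(g, c). actc F A g c"
  show "continuous_map (prod_topology (aut_topology F) (PT F A k)) (PT F A k) ?f"
    unfolding PT_def continuous_map_componentwise
  proof (intro conjI ballI)
    show "?f ` topspace (prod_topology (aut_topology F) (product_topology (\<lambda>_. discrete_topology {..<k}) ?E)) \<subseteq> extensional ?E"
    proof
      fix y assume "y \<in> ?f ` topspace (prod_topology (aut_topology F) (product_topology (\<lambda>_. discrete_topology {..<k}) ?E))"
      then obtain g c where gc: "g \<in> Aut F" "y = actc F A g c" by (auto simp: topspace_aut)
      thus "y \<in> extensional ?E" by (simp add: actc_def)
    qed
  next
    fix a assume a: "a \<in> ?E"
    let ?X = "prod_topology (aut_topology F) (product_topology (\<lambda>_. discrete_topology {..<k}) ?E)"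
    show "continuous_map ?X (discrete_topology {..<k}) (\<lambda>x. ?f x a)"
      unfolding continuous_map_openin_preimage_eq
    proof (intro conjI allI impI)
      show "(\<lambda>x. ?f x a) \<in> topspace ?X \<rightarrow> topspace (discrete_topology {..<k})"
      proof (rule Pi_I)
        fix x assume x: "x \<in> topspace ?X"
        obtain g c where x_eq: "x = (g, c)" by (cases x)
        have g: "g \<in> Aut F" and c: "c \<in> topspace (PT F A k)" using x by (simp_all add: x_eq topspace_aut PT_def)
        have "actc F A g c \<in> topspace (PT F A k)" using actc_in[OF wfA wf g c] .
        hence "actc F A g c a \<in> {..<k}" using PiE_mem a unfolding tsPT by fast
        thus "?f x a \<in> topspace (discrete_topology {..<k})" by (simp add: x_eq)
      qed
    next
      fix U assume "openin (discrete_topology {..<k}) U"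
      show "openin ?X (topspace ?X \<inter> (\<lambda>x. ?f x a) -` U)"
      proof (subst openin_subopen, intro ballI)
        fix p assume p: "p \<in> topspace ?X \<inter> (\<lambda>x. ?f x a) -` U"
        obtain g0 c0 where p_eq: "p = (g0, c0)" by (cases p)
        have g0: "g0 \<in> Aut F" and c0: "c0 \<in> ?E \<rightarrow>\<^sub>E {..<k}"
          using p by (simp_all add: p_eq topspace_aut)
        define a' where "a' = compose (sdom A) (ginv F g0) a"
        have a': "a' \<in> ?E" unfolding a'_def using emb_aut_compose[OF wfA a ginv_aut[OF wf g0]] .
        define S where "S = ginv F g0 ` (a ` sdom A)"
        have finS: "finite S" unfolding S_def using finA by simp
        have Ssub: "S \<subseteq> sdom F" unfolding S_def using PiE_mem[OF emb_PiE[OF a]] ginv_in[OF g0] by blast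
        define Ug where "Ug = Aut F \<inter> {g \<in> PiE (sdom F) (\<lambda>_. sdom F). \<forall>x\<in>S. g x = g0 x}"
        define Vc where "Vc = {c \<in> PiE ?E (\<lambda>_. {..<k}). \<forall>b\<in>{a'}. c b = c0 b}"
        have oU: "openin (aut_topology F) Ug"
          unfolding aut_topology_def Ug_def
          by (rule openin_subtopology_Int2, rule open_fix[OF finS Ssub])
             (use Ssub PiE_mem[OF aut_PiE[OF g0]] in blast)
        have oV: "openin (product_topology (\<lambda>_. discrete_topology {..<k}) ?E) Vc"
          unfolding Vc_def by (rule open_fix) (use a' PiE_mem[OF c0 a'] in simp_all)
        have "openin ?X (Ug \<times> Vc)" using oU oV by (simp add: openin_prod_Times_iff)
        moreover have "p \<in> Ug \<times> Vc" using g0 c0 aut_PiE[OF g0] by (simp add: p_eq Ug_def Vc_def)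
        moreover have "Ug \<times> Vc \<subseteq> topspace ?X \<inter> (\<lambda>x. ?f x a) -` U"
        proof
          fix q assume q: "q \<in> Ug \<times> Vc"
          obtain g c where q_eq: "q = (g, c)" by (cases q)
          have g: "g \<in> Aut F" and gS: "\<forall>x\<in>S. g x = g0 x" and c: "c \<in> ?E \<rightarrow>\<^sub>E {..<k}" and ca: "c a' = c0 a'"
            using q by (simp_all add: q_eq Ug_def Vc_def)
          have "compose (sdom A) (ginv F g) a = a'"
          proof (rule ext)
            fix z show "compose (sdom A) (ginv F g) a z = a' z"
            proof (cases "z \<in> sdom A")
              case True
              let ?x = "ginv F g0 (a z)"
              have az: "a z \<in> sdom F" using PiE_mem[OF emb_PiE[OF a] True] .
              have xS: "?x \<in> S" unfolding S_def using True by blast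
              have x: "?x \<in> sdom F" using ginv_in[OF g0 az] .
              have "g ?x = a z" using gS xS ginv_right[OF g0 az] by simp
              hence "ginv F g (a z) = ?x" using ginv_left[OF g x] by simp
              thus ?thesis using True by (simp add: a'_def compose_def)
            next
              case False thus ?thesis by (simp add: a'_def compose_def)
            qed
          qed
          hence "?f q a = ?f p a" using g g0 a ca by (simp add: q_eq p_eq actc_def a'_def)
          moreover have "q \<in> topspace ?X" using g c by (simp add: q_eq topspace_aut)
          moreover have "?f p a \<in> U" using p by simp
          ultimately show "q \<in> topspace ?X \<inter> (\<lambda>x. ?f x a) -` U" by simp
        qed
        ultimately show "\<exists>T. openin ?X T \<and> p \<in> T \<and> T \<subseteq> topspace ?X \<inter> (\<lambda>x. ?f x a) -` U"
          by blast
      qed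
    qed
  qed
qed




definition inv_set :: "('f,'r,'a) struc \<Rightarrow> (('a \<Rightarrow> 'a) \<Rightarrow> 'x \<Rightarrow> 'x) \<Rightarrow> 'x set \<Rightarrow> bool" where
  "inv_set F act Z \<longleftrightarrow> (\<forall>g\<in>Aut F. \<forall>x\<in>Z. act g x \<in> Z)"

lemma minimal_exists:
  fixes T :: "'x topology"
  assumes fl: "flow F T act" and Z: "closedin T Z" "Z \<noteq> {}" "inv_set F act Z"
  shows "\<exists>Y. Y \<subseteq> Z \<and> closedin T Y \<and> Y \<noteq> {} \<and> inv_set F act Y \<and>
     (\<forall>W. closedin T W \<and> W \<noteq> {} \<and> inv_set F act W \<and> W \<subseteq> Y \<longrightarrow> W = Y)"
proof -
  define AA where "AA = {W. closedin T W \<and> W \<noteq> {} \<and> inv_set F act W \<and> W \<subseteq> Z}"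
  define P where "P = (\<lambda>a b::'x set. b \<subseteq> a)"
  have po: "partial_order_on AA (relation_of P AA)"
  proof (rule partial_order_on_relation_ofI)
    fix a assume "a \<in> AA" show "P a a" by (simp add: P_def)
  next
    fix a b c assume "P a b" "P b c" thus "P a c" by (simp add: P_def)
  next
    fix a b assume "P a b" "P b a" thus "a = b" by (simp add: P_def)
  qed
  have cpt: "compact_space T" using fl by (simp add: flow_def)
  have ZA: "Z \<in> AA" using Z by (simp add: AA_def)
  have "\<exists>m\<in>AA. \<forall>a\<in>AA. P m a \<longrightarrow> a = m"
  proof (rule predicate_Zorn[OF po])
    fix C assume C: "C \<in> Chains (relation_of P AA)"
    have CA: "C \<subseteq> AA" using Chains_relation_of[OF C] .
    have tot: "a \<subseteq> b \<or> b \<subseteq> a" if "a \<in> C" "b \<in> C" for a b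
    proof -
      have "(a, b) \<in> relation_of P AA \<or> (b, a) \<in> relation_of P AA" using C that unfolding Chains_def by simp
      thus ?thesis unfolding relation_of_def P_def by fast
    qed
    show "\<exists>u\<in>AA. \<forall>a\<in>C. P a u"
    proof (cases "C = {}")
      case True thus ?thesis using ZA by fast
    next
      case False
      have Cmem: "closedin T D \<and> D \<noteq> {} \<and> inv_set F act D \<and> D \<subseteq> Z" if "D \<in> C" for D
        using CA that unfolding AA_def by fast
      have cl: "closedin T (\<Inter>C)" by (rule closedin_Inter[OF False]) (use Cmem in fast)
      have ne: "\<Inter>C \<noteq> {}"
      proof -
        have h1: "\<forall>D\<in>C. closedin T D" using Cmem by fast
        have h2: "\<forall>FF. finite FF \<and> FF \<subseteq> C \<longrightarrow> \<Inter>FF \<noteq> {}"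
        proof (intro allI impI)
          fix FF assume FF: "finite FF \<and> FF \<subseteq> C"
          show "\<Inter>FF \<noteq> {}"
          proof (cases "FF = {}")
            case True thus ?thesis by simp
          next
            case False
            have "subset.chain UNIV FF" unfolding subset_chain_def using tot FF by fast
            hence "\<Inter>FF \<in> FF" using Inter_in_chain[OF conjunct1[OF FF] False] by fast
            hence "\<Inter>FF \<in> C" using FF by fast
            thus ?thesis using Cmem by fast
          qed
        qed
        have "(\<forall>D\<in>C. closedin T D) \<and> (\<forall>FF. finite FF \<and> FF \<subseteq> C \<longrightarrow> \<Inter>FF \<noteq> {}) \<longrightarrow> \<Inter>C \<noteq> {}"
          using cpt unfolding compact_space_fip by (rule spec)
        thus ?thesis using h1 h2 by fast
      qed
      have inv: "inv_set F act (\<Inter>C)" unfolding inv_set_def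
      proof (intro ballI)
        fix g x assume g: "g \<in> Aut F" and x: "x \<in> \<Inter>C"
        show "act g x \<in> \<Inter>C"
        proof
          fix D assume D: "D \<in> C"
          have "inv_set F act D" using Cmem[OF D] by fast
          moreover have "x \<in> D" using x D by fast
          ultimately show "act g x \<in> D" using g unfolding inv_set_def by fast
        qed
      qed
      obtain D0 where D0: "D0 \<in> C" using False by fast
      have sub: "\<Inter>C \<subseteq> Z" using Cmem[OF D0] D0 by fast
      have "\<Inter>C \<in> AA" unfolding AA_def using cl ne inv sub by fast
      moreover have "\<forall>a\<in>C. P a (\<Inter>C)" unfolding P_def by fast
      ultimately show ?thesis by fast
    qed
  qed
  then obtain m where m1: "m \<in> AA" and m2': "\<forall>a\<in>AA. P m a \<longrightarrow> a = m" by (elim bexE) 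
  have m2: "a = m" if "a \<in> AA" "a \<subseteq> m" for a using m2' that by (simp add: P_def)
  have mm: "closedin T m" "m \<noteq> {}" "inv_set F act m" "m \<subseteq> Z" using m1 by (simp_all add: AA_def)
  have "\<forall>W. closedin T W \<and> W \<noteq> {} \<and> inv_set F act W \<and> W \<subseteq> m \<longrightarrow> W = m"
  proof (intro allI impI)
    fix W assume W: "closedin T W \<and> W \<noteq> {} \<and> inv_set F act W \<and> W \<subseteq> m"
    have "W \<subseteq> Z" using W mm(4) by (meson subset_trans)
    hence "W \<in> AA" using W by (simp add: AA_def)
    thus "W = m" using m2 W by simp
  qed
  thus ?thesis using mm by (intro exI[of _ m]) simp
qed

lemma minimal_subflow:
  fixes T :: "'x topology"
  assumes fl: "flow F T act" and Y: "closedin T Y" "Y \<noteq> {}" "inv_set F act Y"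
    and mn: "\<forall>W. closedin T W \<and> W \<noteq> {} \<and> inv_set F act W \<and> W \<subseteq> Y \<longrightarrow> W = Y"
  shows "minimal_flow F (subtopology T Y) act"
proof -
  have Ysub: "Y \<subseteq> topspace T" using closedin_subset[OF Y(1)] .
  have ts: "topspace (subtopology T Y) = Y" using Ysub by auto
  have "flow F (subtopology T Y) act"
    unfolding flow_def
  proof (intro conjI ballI)
    show "compact_space (subtopology T Y)"
      by (intro compact_space_subtopology closedin_compact_space) (use fl Y(1) in \<open>simp_all add: flow_def\<close>)
    show "Hausdorff_space (subtopology T Y)"
      using fl by (simp add: flow_def Hausdorff_space_subtopology)
    show "continuous_map (prod_topology (aut_topology F) (subtopology T Y)) (subtopology T Y) (\<lambda>(g, x). act g x)"
    proof (rule continuous_map_into_subtopology)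
      have "continuous_map (prod_topology (aut_topology F) T) T (\<lambda>(g, x). act g x)" using fl by (simp add: flow_def)
      hence "continuous_map (subtopology (prod_topology (aut_topology F) T) (topspace (aut_topology F) \<times> Y)) T (\<lambda>(g, x). act g x)"
        by (rule continuous_map_from_subtopology)
      thus "continuous_map (prod_topology (aut_topology F) (subtopology T Y)) T (\<lambda>(g, x). act g x)"
        by (simp add: subtopology_Times)
      show "(\<lambda>(g, x). act g x) \<in> topspace (prod_topology (aut_topology F) (subtopology T Y)) \<rightarrow> Y"
        using Y(3) topspace_aut[of F] ts by (auto simp: inv_set_def)
    qed
  next
    fix x assume "x \<in> topspace (subtopology T Y)"
    thus "act (restrict id (sdom F)) x = x" using fl Ysub by (auto simp: flow_def)
  next
    fix g h x assume "g \<in> Aut F" "h \<in> Aut F" "x \<in> topspace (subtopology T Y)"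
    thus "act (compose (sdom F) g h) x = act g (act h x)" using fl Ysub by (auto simp: flow_def)
  qed
  moreover have "\<forall>Z. closedin (subtopology T Y) Z \<and> Z \<noteq> {} \<and> (\<forall>g\<in>Aut F. \<forall>x\<in>Z. act g x \<in> Z) \<longrightarrow> Z = topspace (subtopology T Y)"
    using mn Y(1) ts by (auto simp: closedin_closed_subtopology inv_set_def)
  ultimately show ?thesis unfolding minimal_flow_def using ts Y(2) by simp
qed




lemma act_in:
  assumes fl: "flow F T act" and g: "g \<in> Aut F" and x: "x \<in> topspace T"
  shows "act g x \<in> topspace T"
proof -
  have "continuous_map (prod_topology (aut_topology F) T) T (\<lambda>(g,x). act g x)" using fl by (simp add: flow_def)
  moreover have "(g,x) \<in> topspace (prod_topology (aut_topology F) T)" using g x by (simp add: topspace_aut)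
  ultimately show ?thesis using continuous_map_image_subset_topspace by fastforce
qed

lemma umf_card:
  assumes mf: "minimal_flow F T act" and inj: "inj_on (f :: 'x \<Rightarrow> flow_univ) (topspace T)"
    and U: "UMF_card_le F d"
  shows "finite (topspace T) \<and> card (topspace T) \<le> d"
proof -
  have fl: "flow F T act" using mf by (simp add: minimal_flow_def)
  define S where "S = f ` topspace T"
  define j where "j = inv_into (topspace T) f"
  have jf: "j (f x) = x" if "x \<in> topspace T" for x using inj that by (simp add: j_def)
  have jS: "j z \<in> topspace T" if "z \<in> S" for z using that by (auto simp: S_def jf)
  have fj: "f (j z) = z" if "z \<in> S" for z using that by (auto simp: S_def jf)
  define T' where "T' = pullback_topology S j T"
  define act' where "act' = (\<lambda>g z. f (act g (j z)))"
  have tsT': "topspace T' = S" using jS by (auto simp: T'_def topspace_pullback_topology)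
  have cf: "continuous_map T T' f"
    unfolding T'_def
    by (rule continuous_map_pullback') (auto simp: S_def jf intro: continuous_map_eq[OF continuous_map_id])
  have cj: "continuous_map T' T j"
    using continuous_map_pullback[OF continuous_map_id, of S j] by (simp add: T'_def)
  have mf': "minimal_flow F T' act'"
    unfolding minimal_flow_def flow_def
  proof (intro conjI ballI allI impI)
    have "compactin T' (f ` topspace T)"
      using image_compactin[OF _ cf] fl by (simp add: flow_def compact_space_def)
    thus "compact_space T'" by (simp add: compact_space_def tsT' S_def)
    have injj: "inj_on j (topspace T')"
    proof (rule inj_onI)
      fix u v assume u: "u \<in> topspace T'" and v: "v \<in> topspace T'" and e: "j u = j v"
      have "f (j u) = f (j v)" using e by simp
      moreover have "u \<in> S" "v \<in> S" using u v tsT' by blast+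
      ultimately show "u = v" using fj[of u] fj[of v] by metis
    qed
    show "Hausdorff_space T'"
    proof (rule Hausdorff_space_injective_preimage[OF _ cj injj])
      show "Hausdorff_space T" using fl unfolding flow_def by (elim conjE)
    qed
  next
    have c1: "continuous_map (prod_topology (aut_topology F) T') (prod_topology (aut_topology F) T) (\<lambda>p. (fst p, j (snd p)))"
      by (intro continuous_map_pairedI continuous_map_fst continuous_map_compose[OF continuous_map_snd cj, unfolded o_def])
    have c2: "continuous_map (prod_topology (aut_topology F) T) T (\<lambda>(g,x). act g x)" using fl by (simp add: flow_def)
    have "continuous_map (prod_topology (aut_topology F) T') T' (f \<circ> ((\<lambda>(g,x). act g x) \<circ> (\<lambda>p. (fst p, j (snd p)))))"
      by (intro continuous_map_compose[OF continuous_map_compose[OF c1 c2] cf])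
    thus "continuous_map (prod_topology (aut_topology F) T') T' (\<lambda>(g, x). act' g x)"
      by (rule continuous_map_eq) (auto simp: act'_def)
  next
    fix z assume "z \<in> topspace T'"
    hence z: "z \<in> S" by (simp add: tsT')
    thus "act' (restrict id (sdom F)) z = z" using fl jS fj by (simp add: act'_def flow_def)
  next
    fix g h z assume g: "g \<in> Aut F" and h: "h \<in> Aut F" and "z \<in> topspace T'"
    hence z: "z \<in> S" by (simp add: tsT')
    have "act h (j z) \<in> topspace T" using act_in[OF fl h jS[OF z]] .
    thus "act' (compose (sdom F) g h) z = act' g (act' h z)"
      using fl g h jS[OF z] jf by (simp add: act'_def flow_def)
  next
    show "topspace T' \<noteq> {}" using mf by (simp add: tsT' S_def minimal_flow_def)
  next
    fix Z assume Z: "closedin T' Z \<and> Z \<noteq> {} \<and> (\<forall>g\<in>Aut F. \<forall>x\<in>Z. act' g x \<in> Z)"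
    have ZS: "Z \<subseteq> S" using closedin_subset Z tsT' by blast
    define W where "W = {x \<in> topspace T. f x \<in> Z}"
    have "closedin T W" unfolding W_def using closedin_continuous_map_preimage[OF cf] Z by blast
    moreover have "W \<noteq> {}" using Z ZS by (auto simp: W_def S_def)
    moreover have "\<forall>g\<in>Aut F. \<forall>x\<in>W. act g x \<in> W"
    proof (intro ballI)
      fix g x assume g: "g \<in> Aut F" and x: "x \<in> W"
      have "act' g (f x) \<in> Z" using Z g x by (auto simp: W_def)
      thus "act g x \<in> W" using act_in[OF fl g] x jf by (auto simp: W_def act'_def)
    qed
    ultimately have "W = topspace T" using mf by (auto simp: minimal_flow_def)
    thus "Z = topspace T'" using ZS by (auto simp: tsT' S_def W_def)
  qed
  obtain TU :: "flow_univ topology" and actU where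
    u: "universal_minimal_flow F TU actU" "finite (topspace TU)" "card (topspace TU) \<le> d"
    using U unfolding UMF_card_le_def by (elim exE conjE)
  have "\<forall>(T''::flow_univ topology) act''. minimal_flow F T'' act'' \<longrightarrow> (\<exists>h. flow_hom F TU actU T'' act'' h)"
    using u(1) unfolding universal_minimal_flow_def by (elim conjE)
  hence "\<exists>h. flow_hom F TU actU T' act' h" using mf' by blast
  then obtain h where h: "flow_hom F TU actU T' act' h" by (elim exE)
  have hc: "continuous_map TU T' h" using h unfolding flow_hom_def by (elim conjE)
  have heq: "\<forall>g\<in>Aut F. \<forall>x\<in>topspace TU. h (actU g x) = act' g (h x)" using h unfolding flow_hom_def by (elim conjE)
  have mU: "minimal_flow F TU actU" using u(1) unfolding universal_minimal_flow_def by (elim conjE)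
  have flU: "flow F TU actU" using mU unfolding minimal_flow_def by (elim conjE)
  have neU: "topspace TU \<noteq> {}" using mU unfolding minimal_flow_def by (elim conjE)
  have sub: "h ` topspace TU \<subseteq> topspace T'" using continuous_map_image_subset_topspace[OF hc] .
  have H': "Hausdorff_space T'" using mf' unfolding minimal_flow_def flow_def by (elim conjE)
  have "closedin T' (h ` topspace TU)"
  proof -
    have "t1_space T'" using H' by (rule Hausdorff_imp_t1_space)
    hence "\<forall>S. finite S \<and> S \<subseteq> topspace T' \<longrightarrow> closedin T' S" by (simp only: t1_space_closedin_finite)
    moreover have "finite (h ` topspace TU)" using u(2) by (rule finite_imageI)
    ultimately show ?thesis using sub by blast
  qed
  moreover have "h ` topspace TU \<noteq> {}" using neU by simp
  moreover have "\<forall>g\<in>Aut F. \<forall>y\<in>h ` topspace TU. act' g y \<in> h ` topspace TU"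
  proof (intro ballI)
    fix g y assume g: "g \<in> Aut F" and y: "y \<in> h ` topspace TU"
    then obtain x where x: "x \<in> topspace TU" "y = h x" by (elim imageE)
    have "act' g y = h (actU g x)" using heq g x by simp
    moreover have "actU g x \<in> topspace TU" using act_in[OF flU g x(1)] .
    ultimately show "act' g y \<in> h ` topspace TU" by simp
  qed
  moreover have "\<forall>Z. closedin T' Z \<and> Z \<noteq> {} \<and> (\<forall>g\<in>Aut F. \<forall>x\<in>Z. act' g x \<in> Z) \<longrightarrow> Z = topspace T'"
    using mf' unfolding minimal_flow_def by (elim conjE)
  ultimately have eq: "h ` topspace TU = topspace T'" by blast
  have finS: "finite S" using eq tsT' finite_imageI[OF u(2), of h] by simp
  have "card S \<le> card (topspace TU)" using eq tsT' card_image_le[OF u(2), of h] by simp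
  hence cS: "card S \<le> d" using u(3) by simp
  have "finite (topspace T)" using finS inj unfolding S_def by (simp add: finite_image_iff)
  moreover have "card (topspace T) = card S" using inj unfolding S_def by (simp add: card_image)
  ultimately show ?thesis using cS by simp
qed




lemma age_finite:
  assumes wf: "wf_struc F" and lf: "locally_finite F" and C: "in_age C F"
  shows "finite (sdom C)"
proof -
  obtain S where S: "finite S" "S \<subseteq> sdom C" "generated C S = sdom C"
    using C by (auto simp: in_age_def fin_generated_def)
  obtain e where e: "e \<in> embeddings C F" using C by (auto simp: in_age_def)
  have wfC: "wf_struc C" using C by (simp add: in_age_def)
  have ePi: "e \<in> sdom C \<rightarrow>\<^sub>E sdom F" using emb_PiE[OF e] .
  define G where "G = generated F (e ` S)"
  have finG: "finite G" unfolding G_def using lf S ePi by (auto simp: locally_finite_def)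
  have Gcl: "sfn F f ys \<in> G" if "set ys \<subseteq> G" "length ys = far F f" for f ys
    using that unfolding G_def generated_def closed_sub_def by blast
  have eSG: "e ` S \<subseteq> G" unfolding G_def generated_def by blast
  define T0 where "T0 = {x \<in> sdom C. e x \<in> G}"
  have "closed_sub C T0"
    unfolding closed_sub_def
  proof (intro conjI allI impI)
    show "T0 \<subseteq> sdom C" by (auto simp: T0_def)
  next
    fix f xs assume xs: "set xs \<subseteq> T0 \<and> length xs = far C f"
    have xsC: "set xs \<subseteq> sdom C" using xs by (auto simp: T0_def)
    have s1: "sfn C f xs \<in> sdom C" using wfC xsC xs by (auto simp: wf_struc_def)
    have "e (sfn C f xs) = sfn F f (map e xs)" using e xsC xs by (auto simp: embeddings_def)
    moreover have "sfn F f (map e xs) \<in> G"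
      by (rule Gcl) (use xs e in \<open>auto simp: T0_def embeddings_def\<close>)
    ultimately show "sfn C f xs \<in> T0" using s1 by (simp add: T0_def)
  qed
  moreover have "S \<subseteq> T0" using S eSG by (auto simp: T0_def)
  ultimately have "sdom C \<subseteq> T0" using S(3) unfolding generated_def by blast
  hence "e ` sdom C \<subseteq> G" by (auto simp: T0_def)
  hence "finite (e ` sdom C)" using finG finite_subset by blast
  moreover have "inj_on e (sdom C)" using e by (simp add: embeddings_def)
  ultimately show ?thesis using finite_image_iff by blast
qed

definition enc :: "('b set) \<Rightarrow> ('b \<Rightarrow> nat) \<Rightarrow> flow_univ" where
  "enc E c = (\<lambda>Q. Q (\<lambda>m. c (from_nat_into E (fst (prod_decode m))) = snd (prod_decode m)))"

lemma enc_inj: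
  assumes "countable E" shows "inj_on (enc E) (PiE E (\<lambda>_. K))"
proof (rule inj_onI)
  fix c1 c2 assume c1: "c1 \<in> PiE E (\<lambda>_. K)" and c2: "c2 \<in> PiE E (\<lambda>_. K)" and eq: "enc E c1 = enc E c2"
  let ?code = "\<lambda>c m. c (from_nat_into E (fst (prod_decode m))) = snd (prod_decode m)"
  have "?code c1 = ?code c2"
    using fun_cong[OF eq, of "\<lambda>p. p = ?code c1"] by (simp add: enc_def)
  show "c1 = c2"
  proof (rule ext)
    fix x show "c1 x = c2 x"
    proof (cases "x \<in> E")
      case True
      have "?code c1 (prod_encode (to_nat_on E x, c1 x)) = ?code c2 (prod_encode (to_nat_on E x, c1 x))"
        using \<open>?code c1 = ?code c2\<close> by (rule fun_cong)
      hence "c2 x = c1 x" using True assms by simp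
      thus ?thesis by simp
    next
      case False thus ?thesis using c1 c2 by (auto simp: PiE_def extensional_def)
    qed
  qed
qed




theorem mainTheorem12:
  fixes F :: "('f,'r,'a) struc" and A :: "('f,'r,'b) struc" and d :: nat
  assumes "wf_struc F" and "countable (sdom F)" and "locally_finite F"
    and "in_age A F" and "homogeneous_for F A"
    and "UMF_card_le F d"
  shows "\<forall>(B :: ('f,'r,'c) struc) k. in_age B F \<and> k \<ge> 2 \<longrightarrow> arrows F B A k d"
proof (intro allI impI)
  fix B :: "('f,'r,'c) struc" and k :: nat
  assume Bk: "in_age B F \<and> k \<ge> 2"
  have wf: "wf_struc F" using assms(1) .
  have wfA: "wf_struc A" using assms(4) by (simp add: in_age_def)
  have ageB: "in_age B F" using Bk by (elim conjE)
  have wfB: "wf_struc B" using ageB by (simp add: in_age_def)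
  have finA: "finite (sdom A)" using age_finite[OF wf assms(3,4)] .
  have finB: "finite (sdom B)" using age_finite[OF wf assms(3) ageB] .
  have k0: "k > 0" using Bk by simp
  let ?E = "embeddings A F"
  let ?P = "PT F A k"
  have tsP: "topspace ?P = PiE ?E (\<lambda>_. {..<k})" by (rule tsPT)
  have fl: "flow F ?P (actc F A)" using actc_flow[OF wfA wf finA k0] .
  have cntE: "countable ?E"
  proof -
    have "?E \<subseteq> PiE (sdom A) (\<lambda>_. sdom F)" using emb_PiE by (rule subsetI)
    moreover have "countable (PiE (sdom A) (\<lambda>_. sdom F))" by (rule countable_PiE[OF finA assms(2)])
    ultimately show ?thesis by (rule countable_subset)
  qed
  show "arrows F B A k d"
    unfolding arrows_def
  proof (intro allI impI)
    fix col :: "('b \<Rightarrow> 'a) \<Rightarrow> nat" assume col: "col ` ?E \<subseteq> {..<k}"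
    define c0 where "c0 = restrict col ?E"
    have c0P: "c0 \<in> topspace ?P" unfolding tsP c0_def restrict_PiE_iff using col by (simp add: image_subset_iff)
    define Orb where "Orb = (\<lambda>g. actc F A g c0) ` Aut F"
    define Z where "Z = ?P closure_of Orb"
    have OP: "Orb \<subseteq> topspace ?P"
    proof
      fix y assume "y \<in> Orb"
      then obtain g where "g \<in> Aut F" "y = actc F A g c0" unfolding Orb_def by (elim imageE)
      thus "y \<in> topspace ?P" using actc_in[OF wfA wf _ c0P] by simp
    qed
    have Zcl: "closedin ?P Z" unfolding Z_def by (rule closedin_closure_of)
    have "actc F A (restrict id (sdom F)) c0 \<in> Orb" unfolding Orb_def using id_aut[OF wf] by (rule imageI)
    hence Zne: "Z \<noteq> {}" using closure_of_subset[OF OP] unfolding Z_def by blast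
    have Zinv: "inv_set F (actc F A) Z"
      unfolding inv_set_def
    proof (intro ballI)
      fix g c assume g: "g \<in> Aut F" and c: "c \<in> Z"
      have cm: "continuous_map ?P ?P (actc F A g)"
      proof -
        have c1: "continuous_map ?P (prod_topology (aut_topology F) ?P) (\<lambda>c. (g, c))"
          using g by (intro continuous_map_pairedI) (simp_all add: topspace_aut continuous_map_id[unfolded id_def])
        have c2: "continuous_map (prod_topology (aut_topology F) ?P) ?P (\<lambda>(g,x). actc F A g x)"
          using fl unfolding flow_def by (elim conjE)
        have "continuous_map ?P ?P ((\<lambda>(g,x). actc F A g x) \<circ> (\<lambda>c. (g, c)))"
          by (rule continuous_map_compose[OF c1 c2])
        moreover have "((\<lambda>(g,x). actc F A g x) \<circ> (\<lambda>c. (g, c))) = actc F A g" by (simp add: o_def)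
        ultimately show ?thesis by simp
      qed
      have comp: "\<forall>g\<in>Aut F. \<forall>h\<in>Aut F. \<forall>x\<in>topspace ?P. actc F A (compose (sdom F) g h) x = actc F A g (actc F A h x)"
        using fl unfolding flow_def by (elim conjE)
      have sO: "actc F A g ` Orb \<subseteq> Orb"
      proof
        fix y assume "y \<in> actc F A g ` Orb"
        then obtain h where h: "h \<in> Aut F" "y = actc F A g (actc F A h c0)" unfolding Orb_def by blast
        have "actc F A (compose (sdom F) g h) c0 = actc F A g (actc F A h c0)" using comp g h(1) c0P by blast
        hence "y = actc F A (compose (sdom F) g h) c0" using h(2) by simp
        thus "y \<in> Orb" unfolding Orb_def using comp_aut[OF wf g h(1)] by blast
      qed
      have "actc F A g ` Z \<subseteq> ?P closure_of (actc F A g ` Orb)"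
        unfolding Z_def by (rule continuous_map_image_closure_subset[OF cm])
      also have "\<dots> \<subseteq> Z" unfolding Z_def by (rule closure_of_mono[OF sO])
      finally show "actc F A g c \<in> Z" using c by blast
    qed
    obtain Y where Y: "Y \<subseteq> Z" "closedin ?P Y" "Y \<noteq> {}" "inv_set F (actc F A) Y"
      "\<forall>W. closedin ?P W \<and> W \<noteq> {} \<and> inv_set F (actc F A) W \<and> W \<subseteq> Y \<longrightarrow> W = Y"
      using minimal_exists[OF fl Zcl Zne Zinv] by blast
    have YP: "Y \<subseteq> topspace ?P" using closedin_subset[OF Y(2)] .
    have mY: "minimal_flow F (subtopology ?P Y) (actc F A)" using minimal_subflow[OF fl Y(2-5)] .
    have tsY: "topspace (subtopology ?P Y) = Y" using YP by (simp add: Int_absorb1)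
    have "inj_on (enc ?E) (topspace (subtopology ?P Y))"
      unfolding tsY using enc_inj[OF cntE, of "{..<k}"] YP unfolding tsP by (rule inj_on_subset)
    hence "finite (topspace (subtopology ?P Y)) \<and> card (topspace (subtopology ?P Y)) \<le> d"
      by (rule umf_card[OF mY _ assms(6)])
    hence finY: "finite Y" and cardY: "card Y \<le> d" unfolding tsY by simp_all
    obtain c where cY: "c \<in> Y" using Y(3) by blast
    have cP: "c \<in> topspace ?P" using cY YP by blast
    obtain a0 where a0: "a0 \<in> ?E" using assms(4) unfolding in_age_def by blast
    have cE: "c ` ?E \<subseteq> (\<lambda>c'. c' a0) ` Y"
    proof
      fix v assume "v \<in> c ` ?E"
      then obtain a where a: "a \<in> ?E" "v = c a" by (elim imageE)
      obtain g where g: "g \<in> Aut F" "compose (sdom A) g a0 = a"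
        using assms(5) a0 a(1) unfolding homogeneous_for_def by blast
      have gi: "ginv F g \<in> Aut F" using ginv_aut[OF wf g(1)] .
      have "actc F A (ginv F g) c \<in> Y" using Y(4) gi cY unfolding inv_set_def by blast
      moreover have "actc F A (ginv F g) c a0 = v"
        using gi a0 a g by (simp add: actc_def ginv_ginv)
      ultimately show "v \<in> (\<lambda>c'. c' a0) ` Y" by (metis image_eqI)
    qed
    have fincE: "finite (c ` ?E)" using finite_subset[OF cE finite_imageI[OF finY]] .
    have "card (c ` ?E) \<le> card ((\<lambda>c'. c' a0) ` Y)" using card_mono[OF finite_imageI[OF finY] cE] .
    also have "\<dots> \<le> card Y" using card_image_le[OF finY] .
    finally have cardcE: "card (c ` ?E) \<le> d" using cardY by simp
    obtain b0 where b0: "b0 \<in> embeddings B F" using ageB unfolding in_age_def by blast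
    define K where "K = (\<lambda>a. compose (sdom A) b0 a) ` embeddings A B"
    have KE: "K \<subseteq> ?E"
    proof
      fix x assume "x \<in> K"
      then obtain a where "a \<in> embeddings A B" "x = compose (sdom A) b0 a" unfolding K_def by (elim imageE)
      thus "x \<in> ?E" using emb_compose[OF wfA _ b0] by simp
    qed
    have finAB: "finite (embeddings A B)"
    proof -
      have "embeddings A B \<subseteq> PiE (sdom A) (\<lambda>_. sdom B)" using emb_PiE by (rule subsetI)
      moreover have "finite (PiE (sdom A) (\<lambda>_. sdom B))" by (rule finite_PiE[OF finA finB])
      ultimately show ?thesis by (rule finite_subset)
    qed
    have finK: "finite K" unfolding K_def using finAB by (rule finite_imageI)
    define N where "N = {c' \<in> PiE ?E (\<lambda>_. {..<k}). \<forall>a\<in>K. c' a = c a}"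
    have cK: "\<forall>a\<in>K. c a \<in> {..<k}"
    proof
      fix a assume "a \<in> K" hence "a \<in> ?E" using KE by blast
      thus "c a \<in> {..<k}" using PiE_mem cP unfolding tsP by fast
    qed
    have oN: "openin ?P N" unfolding N_def PT_def by (rule open_fix[OF finK KE cK])
    have cN: "c \<in> N" using cP unfolding N_def tsP by simp
    have "c \<in> Z" using cY Y(1) by blast
    hence "\<forall>T. c \<in> T \<and> openin ?P T \<longrightarrow> (\<exists>y. y \<in> Orb \<and> y \<in> T)" unfolding Z_def in_closure_of by (elim conjE)
    then obtain y where y: "y \<in> Orb" "y \<in> N" using oN cN by blast
    then obtain g where g: "g \<in> Aut F" "y = actc F A g c0" unfolding Orb_def by (elim imageE)
    have gi: "ginv F g \<in> Aut F" using ginv_aut[OF wf g(1)] .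
    have colK: "col (compose (sdom A) (ginv F g) a) = c a" if "a \<in> K" for a
    proof -
      have aE: "a \<in> ?E" using that KE by blast
      have inE: "compose (sdom A) (ginv F g) a \<in> ?E" using emb_aut_compose[OF wfA aE gi] .
      have "y a = c a" using y(2) that unfolding N_def by blast
      moreover have "y a = col (compose (sdom A) (ginv F g) a)"
        using g aE inE by (simp add: actc_def c0_def)
      ultimately show ?thesis by simp
    qed
    define b where "b = compose (sdom B) (ginv F g) b0"
    have bE: "b \<in> embeddings B F" unfolding b_def using emb_aut_compose[OF wfB b0 gi] .
    have sub: "col ` ((\<lambda>a. compose (sdom A) b a) ` embeddings A B) \<subseteq> c ` ?E"
    proof
      fix v assume "v \<in> col ` ((\<lambda>a. compose (sdom A) b a) ` embeddings A B)"
      then obtain a' where a': "a' \<in> embeddings A B" "v = col (compose (sdom A) b a')" by blast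
      have "a' \<in> sdom A \<rightarrow> sdom B" using emb_PiE[OF a'(1)] by (simp add: PiE_iff Pi_iff)
      hence "compose (sdom A) b a' = compose (sdom A) (ginv F g) (compose (sdom A) b0 a')"
        unfolding b_def by (rule compose_assoc[symmetric])
      moreover have inK: "compose (sdom A) b0 a' \<in> K" using a'(1) unfolding K_def by (rule imageI)
      ultimately have "v = c (compose (sdom A) b0 a')" using a'(2) colK[OF inK] by simp
      moreover have "compose (sdom A) b0 a' \<in> ?E" using inK KE by blast
      ultimately show "v \<in> c ` ?E" by blast
    qed
    have "card (col ` ((\<lambda>a. compose (sdom A) b a) ` embeddings A B)) \<le> card (c ` ?E)"
      by (rule card_mono[OF fincE sub])
    hence "card (col ` ((\<lambda>a. compose (sdom A) b a) ` embeddings A B)) \<le> d" using cardcE by simp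
    thus "\<exists>b\<in>embeddings B F. card (col ` ((\<lambda>a. compose (sdom A) b a) ` embeddings A B)) \<le> d"
      using bE by blast
  qed
qed


end
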